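(* Let $([v_{ij}:v_{ji}])$ be common lines data for planes $P_1,\dots,P_N$, and let $i,j,k,m$ be distinct indices such that the triples $(i,j,k)$ and $(i,j,m)$ strictly satisfy the spherical triangle inequalities. Choose unit-norm representatives of all the pairs involved and set $$L_{ijk,ijm}=\big(v_{ki}\cdot v_{kj}-(v_{ij}\cdot v_{ik})(v_{ji}\cdot v_{jk})\big)\,\big|\det[v_{ij},v_{im}]\det[v_{ji},v_{jm}]\big|-\sigma\big(v_{mi}\cdot v_{mj}-(v_{ij}\cdot v_{im})(v_{ji}\cdot v_{jm})\big)\,\big|\det[v_{ij},v_{ik}]\det[v_{ji},v_{jk}]\big|,$$ where $\sigma=\operatorname{sign}\big(\det[v_{ij},v_{ik}]\det[v_{ij},v_{im}]\det[v_{ji},v_{jk}]\det[v_{ji},v_{jm}]\big)$. Suppose $L_{ijk,ijm}=0$. Then for any frames $F_i,F_j,F_k$ realizing the triple $(i,j,k)$ and any frames $G_i,G_j,G_m$ realizing the triple $(i,j,m)$, there exists a unique $A\in\mathrm O(3)$ with $AF_i=G_i$ and $AF_j=G_j$.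
   Context: A frame is an ordered pair $(a,b)$ of orthonormal vectors in $\mathbb R^3$. Planes $P_1=\dots=P_N=\mathbb R^2$; a frame $F_i=(a_i,b_i)$ gives the embedding $\iota_i:P_i\to\mathbb R^3$, $\iota_i(x,y)=xa_i+yb_i$. $\mathrm O(3)$ is the group of all $3\times3$ orthogonal matrices, acting on frames by $A(a,b)=(Aa,Ab)$. Common lines data is a collection $([v_{ij}:v_{ji}])_{1\le i<j\le N}$ of elements of $\mathbb P(P_i\times P_j)$ (nonzero pairs $(v_{ij},v_{ji})\in\mathbb R^2\times\mathbb R^2$ up to nonzero scaling) with $\|v_{ij}\|^2=\|v_{ji}\|^2$; indices of a pair may be written in either order. Frames $F_i,F_j,F_k$ realize the triple $(i,j,k)$ if $\iota_i(v_{ij})=\iota_j(v_{ji})$, $\iota_i(v_{ik})=\iota_k(v_{ki})$, $\iota_j(v_{jk})=\iota_k(v_{kj})$. For a triple and representatives, $\alpha_{ijk}=\cos^{-1}\frac{v_{ij}\cdot v_{ik}}{\|v_{ij}\|\|v_{ik}\|}$, $\beta_{ijk}=\cos^{-1}\frac{v_{ji}\cdot v_{jk}}{\|v_{ji}\|\|v_{jk}\|}$, $\gamma_{ijk}=\cos^{-1}\frac{v_{ki}\cdot v_{kj}}{\|v_{ki}\|\|v_{kj}\|}$; the triple strictly satisfies the spherical triangle inequalities if for any representatives $\beta+\gamma>\alpha$, $\alpha+\gamma>\beta$, $\alpha+\beta>\gamma$, $\alpha+\beta+\gamma<2\pi$. $\det[u,w]$ denotes the determinant of the $2\times2$ matrix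 with columns $u,w$. *)

theory Defs
  imports "HOL-Analysis.Analysis"
begin

text \<open>Planes P_i = R^2 are modelled by real^2; a frame is a pair of vectors in real^3.\<close>

type_synonym frame = "(real^3) \<times> (real^3)"

definition is_frame :: "frame \<Rightarrow> bool" where
  "is_frame F \<longleftrightarrow> norm (fst F) = 1 \<and> norm (snd F) = 1 \<and> fst F \<bullet> snd F = 0"

definition emb :: "frame \<Rightarrow> real^2 \<Rightarrow> real^3" where
  "emb F x = (x $ 1) *\<^sub>R fst F + (x $ 2) *\<^sub>R snd F"

definition act :: "real^3^3 \<Rightarrow> frame \<Rightarrow> frame" where
  "act A F = (A *v fst F, A *v snd F)"

text \<open>Common lines data, given by representatives v p q = v_pq, for indices in {1..N}.\<close>
definition common_lines_data :: "nat \<Rightarrow> (nat \<Rightarrow> nat \<Rightarrow> real^2) \<Rightarrow> bool" where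
  "common_lines_data N v \<longleftrightarrow>
     (\<forall>p\<in>{1..N}. \<forall>q\<in>{1..N}. p \<noteq> q \<longrightarrow>
        (v p q, v q p) \<noteq> (0, 0) \<and> norm (v p q) ^ 2 = norm (v q p) ^ 2)"

definition realizes :: "(nat \<Rightarrow> nat \<Rightarrow> real^2) \<Rightarrow> nat \<Rightarrow> nat \<Rightarrow> nat \<Rightarrow> frame \<Rightarrow> frame \<Rightarrow> frame \<Rightarrow> bool" where
  "realizes v i j k Fi Fj Fk \<longleftrightarrow>
     emb Fi (v i j) = emb Fj (v j i) \<and>
     emb Fi (v i k) = emb Fk (v k i) \<and>
     emb Fj (v j k) = emb Fk (v k j)"

definition angle2 :: "real^2 \<Rightarrow> real^2 \<Rightarrow> real" where
  "angle2 u w = arccos ((u \<bullet> w) / (norm u * norm w))"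

definition strict_sph_tri :: "(nat \<Rightarrow> nat \<Rightarrow> real^2) \<Rightarrow> nat \<Rightarrow> nat \<Rightarrow> nat \<Rightarrow> bool" where
  "strict_sph_tri v i j k \<longleftrightarrow>
     (let \<alpha> = angle2 (v i j) (v i k); \<beta> = angle2 (v j i) (v j k); \<gamma> = angle2 (v k i) (v k j)
      in \<beta> + \<gamma> > \<alpha> \<and> \<alpha> + \<gamma> > \<beta> \<and> \<alpha> + \<beta> > \<gamma> \<and> \<alpha> + \<beta> + \<gamma> < 2 * pi)"

definition det2 :: "real^2 \<Rightarrow> real^2 \<Rightarrow> real" where
  "det2 u w = u $ 1 * w $ 2 - u $ 2 * w $ 1"

definition L_quant :: "(nat \<Rightarrow> nat \<Rightarrow> real^2) \<Rightarrow> nat \<Rightarrow> nat \<Rightarrow> nat \<Rightarrow> nat \<Rightarrow> real" where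
  "L_quant v i j k m =
     (let \<sigma> = sgn (det2 (v i j) (v i k) * det2 (v i j) (v i m) * det2 (v j i) (v j k) * det2 (v j i) (v j m))
      in (v k i \<bullet> v k j - (v i j \<bullet> v i k) * (v j i \<bullet> v j k)) * \<bar>det2 (v i j) (v i m) * det2 (v j i) (v j m)\<bar>
         - \<sigma> * (v m i \<bullet> v m j - (v i j \<bullet> v i m) * (v j i \<bullet> v j m)) * \<bar>det2 (v i j) (v i k) * det2 (v j i) (v j k)\<bar>)"

end

theory Submission
  imports Defs
begin


lemma expand3:
  fixes e1 e2 e3 x :: "real^3"
  assumes "e1 \<bullet> e1 = 1" "e2 \<bullet> e2 = 1" "e3 \<bullet> e3 = 1"
    "e1 \<bullet> e2 = 0" "e1 \<bullet> e3 = 0" "e2 \<bullet> e3 = 0"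
  shows "x = (x \<bullet> e1) *\<^sub>R e1 + (x \<bullet> e2) *\<^sub>R e2 + (x \<bullet> e3) *\<^sub>R e3"
proof -
  let ?B = "{e1, e2, e3}"
  have ne: "e1 \<noteq> e2" "e1 \<noteq> e3" "e2 \<noteq> e3" using assms by (auto simp: inner_commute)
  have "pairwise orthogonal ?B" using assms
    by (auto simp: pairwise_def orthogonal_def inner_commute)
  moreover have "0 \<notin> ?B" using assms by auto
  ultimately have ind: "independent ?B" by (rule pairwise_orthogonal_independent)
  have "card ?B = 3" using ne by auto
  hence "dim (UNIV :: (real^3) set) \<le> card ?B" by simp
  hence sp: "UNIV \<subseteq> span ?B" using card_ge_dim_independent[OF _ ind] by blast
  define r where "r = x - ((x \<bullet> e1) *\<^sub>R e1 + (x \<bullet> e2) *\<^sub>R e2 + (x \<bullet> e3) *\<^sub>R e3)"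
  have "\<And>y. y \<in> ?B \<Longrightarrow> orthogonal r y"
    using assms by (auto simp: r_def orthogonal_def inner_diff_left inner_add_left)
      (auto simp: inner_commute)
  hence "orthogonal r r" using sp by (meson UNIV_I orthogonal_to_span subsetD)
  hence "r = 0" by (simp add: orthogonal_def)
  thus ?thesis by (simp add: r_def)
qed

lemma unit_n:
  fixes p q :: "real^3" and t :: real
  assumes "p \<bullet> p = 1" "q \<bullet> q = 1" "p \<bullet> q = t" "\<bar>t\<bar> < 1"
  defines "s \<equiv> sqrt (1 - t\<^sup>2)"
  defines "n \<equiv> (1 / s) *\<^sub>R (q - t *\<^sub>R p)"
  shows "s > 0" "n \<bullet> n = 1" "p \<bullet> n = 0" "q = t *\<^sub>R p + s *\<^sub>R n"
proof -
  have t2: "t\<^sup>2 < 1" using assms(4) by (simp add: abs_square_less_1)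
  show sp: "s > 0" unfolding s_def using t2 by simp
  have ss: "s * s = 1 - t\<^sup>2" unfolding s_def using t2
    by (metis abs_of_nonneg diff_ge_0_iff_ge less_eq_real_def real_sqrt_abs2 real_sqrt_mult)
  have "(q - t *\<^sub>R p) \<bullet> (q - t *\<^sub>R p) = 1 - t\<^sup>2"
    using assms(1-3) by (simp add: inner_diff_left inner_diff_right inner_commute power2_eq_square)
  moreover have "n \<bullet> n = (1/s) * (1/s) * ((q - t *\<^sub>R p) \<bullet> (q - t *\<^sub>R p))"
    unfolding n_def by (simp only: inner_scaleR_left inner_scaleR_right)
  ultimately show "n \<bullet> n = 1" using sp ss t2 by simp
  show "p \<bullet> n = 0" unfolding n_def using assms(1-3) by (simp add: inner_diff_right)
  show "q = t *\<^sub>R p + s *\<^sub>R n" unfolding n_def using sp by simp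
qed

lemma geom:
  fixes c p q c' p' q' :: "real^3" and t :: real
  assumes "c \<bullet> c = 1" "p \<bullet> p = 1" "q \<bullet> q = 1" "c \<bullet> p = 0" "c \<bullet> q = 0" "p \<bullet> q = t"
    and "c' \<bullet> c' = 1" "p' \<bullet> p' = 1" "q' \<bullet> q' = 1" "c' \<bullet> p' = 0" "c' \<bullet> q' = 0" "p' \<bullet> q' = t"
    and "\<bar>t\<bar> < 1"
  shows "\<exists>!A::real^3^3. orthogonal_matrix A \<and> A *v c = c' \<and> A *v p = p' \<and> A *v q = q'"
proof -
  define s where "s = sqrt (1 - t\<^sup>2)"
  define n where "n = (1 / s) *\<^sub>R (q - t *\<^sub>R p)"
  define n' where "n' = (1 / s) *\<^sub>R (q' - t *\<^sub>R p')"
  note N = unit_n[OF assms(2,3,6,13), folded s_def, folded n_def]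
  note N' = unit_n[OF assms(8,9,12,13), folded s_def, folded n'_def]
  have cn: "c \<bullet> n = 0" unfolding n_def using assms by (simp add: inner_diff_right)
  have cn': "c' \<bullet> n' = 0" unfolding n'_def using assms by (simp add: inner_diff_right)
  have ex: "\<And>x. x = (x \<bullet> c) *\<^sub>R c + (x \<bullet> p) *\<^sub>R p + (x \<bullet> n) *\<^sub>R n"
    by (rule expand3) (use assms N cn in auto)
  define f where "f x = (x \<bullet> c) *\<^sub>R c' + (x \<bullet> p) *\<^sub>R p' + (x \<bullet> n) *\<^sub>R n'" for x
  have lin: "linear f" unfolding f_def
    by (intro linearI) (simp_all add: inner_add_left algebra_simps)
  have fip: "f x \<bullet> f y = x \<bullet> y" for x y
  proof -
    have "f x \<bullet> f y = (x \<bullet> c) * (y \<bullet> c) + (x \<bullet> p) * (y \<bullet> p) + (x \<bullet> n) * (y \<bullet> n)"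
      unfolding f_def using assms N' cn'
      by (simp add: inner_add_left inner_add_right inner_commute)
    also have "\<dots> = x \<bullet> ((y \<bullet> c) *\<^sub>R c + (y \<bullet> p) *\<^sub>R p + (y \<bullet> n) *\<^sub>R n)"
      by (simp add: inner_add_right)
    also have "\<dots> = x \<bullet> y" using ex[of y] by simp
    finally show ?thesis .
  qed
  have ot: "orthogonal_transformation f" using lin fip by (simp add: orthogonal_transformation_def)
  define A where "A = matrix f"
  have Av: "A *v x = f x" for x unfolding A_def using lin by (simp add: matrix_works)
  have fc: "f c = c'" "f p = p'" "f n = n'" unfolding f_def using assms N cn
    by (simp_all add: inner_commute)
  have fq: "f q = q'"
  proof -
    have "f q = t *\<^sub>R f p + s *\<^sub>R f n" using N(4) lin
      by (metis linear_add linear_scale)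
    thus ?thesis using fc N'(4) by simp
  qed
  have "orthogonal_matrix A \<and> A *v c = c' \<and> A *v p = p' \<and> A *v q = q'"
    using ot orthogonal_transformation_matrix A_def Av fc fq by auto
  moreover have "B = A" if B: "orthogonal_matrix B \<and> B *v c = c' \<and> B *v p = p' \<and> B *v q = q'" for B
  proof -
    have Bn: "B *v n = n'"
    proof -
      have "n = (1 / s) *\<^sub>R (q - t *\<^sub>R p)" by (simp add: n_def)
      hence "B *v n = (1 / s) *\<^sub>R (B *v q - t *\<^sub>R (B *v p))"
        by (simp add: matrix_vector_mult_scaleR matrix_vector_right_distrib matrix_vector_mult_diff_distrib)
      thus ?thesis using B n'_def by simp
    qed
    have "B *v x = A *v x" for x
    proof -
      have "B *v x = B *v ((x \<bullet> c) *\<^sub>R c + (x \<bullet> p) *\<^sub>R p + (x \<bullet> n) *\<^sub>R n)"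
        using ex[of x] by simp
      also have "\<dots> = f x" unfolding f_def using B Bn
        by (simp add: matrix_vector_mult_scaleR matrix_vector_right_distrib)
      finally show ?thesis using Av by simp
    qed
    thus ?thesis by (simp add: matrix_eq)
  qed
  ultimately show ?thesis by blast
qed



definition J :: "real^2 \<Rightarrow> real^2" where
  "J u = (\<chi> i. if i = 1 then - (u $ 2) else u $ 1)"

lemma J_comp[simp]: "J u $ 1 = - (u $ 2)" "J u $ 2 = u $ 1"
  by (simp_all add: J_def)

lemma inner2: "(u::real^2) \<bullet> w = u$1*w$1 + u$2*w$2"
  by (simp add: inner_vec_def sum_2)

lemma unit2: "norm (u::real^2) = 1 \<Longrightarrow> u$1*u$1 + u$2*u$2 = 1"
  by (simp add: norm_eq_1 inner2)

lemma emb_inner: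
  assumes "is_frame F"
  shows "emb F x \<bullet> emb F y = x \<bullet> y"
proof -
  have "fst F \<bullet> fst F = 1" "snd F \<bullet> snd F = 1" "fst F \<bullet> snd F = 0" "snd F \<bullet> fst F = 0"
    using assms by (auto simp: is_frame_def norm_eq_1 inner_commute)
  thus ?thesis by (simp add: emb_def inner2 inner_add_left inner_add_right)
qed

lemma emb_expand:
  assumes "norm u = 1"
  shows "emb F x = (x \<bullet> u) *\<^sub>R emb F u + det2 u x *\<^sub>R emb F (J u)"
proof -
  have u: "u$1*u$1 + u$2*u$2 = 1" using unit2[OF assms] .
  have "(x \<bullet> u) *\<^sub>R emb F u + det2 u x *\<^sub>R emb F (J u)
      = ((x\<bullet>u) * u$1 - det2 u x * u$2) *\<^sub>R fst F + ((x\<bullet>u) * u$2 + det2 u x * u$1) *\<^sub>R snd F"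
    by (simp add: emb_def algebra_simps)
  also have "(x\<bullet>u) * u$1 - det2 u x * u$2 = x$1 * (u$1*u$1 + u$2*u$2)"
    by (simp add: inner2 det2_def algebra_simps)
  also have "(x\<bullet>u) * u$2 + det2 u x * u$1 = x$2 * (u$1*u$1 + u$2*u$2)"
    by (simp add: inner2 det2_def algebra_simps)
  finally show ?thesis by (simp add: emb_def u)
qed

lemma J_inner: "u \<bullet> J u = 0" "J u \<bullet> J u = u \<bullet> u"
  by (simp_all add: inner2)

lemma emb_act: "(A::real^3^3) *v emb F x = emb (act A F) x"
  by (simp add: emb_def act_def matrix_vector_mult_scaleR matrix_vector_right_distrib)

lemma emb_axis: "emb F (axis 1 1) = fst F" "emb F (axis 2 1) = snd F"
  by (simp_all add: emb_def axis_def)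

lemma trig:
  fixes a b g :: real
  assumes "0 \<le> a" "a \<le> pi" "0 \<le> b" "b \<le> pi" "0 \<le> g" "g \<le> pi"
    and "b + g > a" "a + g > b" "a + b > g" "a + b + g < 2 * pi"
  shows "\<bar>cos g - cos a * cos b\<bar> < sin a * sin b"
proof -
  have "cos g < cos \<bar>a - b\<bar>"
    using assms by (intro cos_monotone_0_pi) auto
  hence 1: "cos g < cos a * cos b + sin a * sin b"
    by (metis cos_abs_real cos_diff)
  have "cos (a + b) < cos g"
  proof (cases "a + b \<le> pi")
    case True thus ?thesis using assms by (intro cos_monotone_0_pi) auto
  next
    case False
    have "cos (2*pi - (a+b)) < cos g" using assms False by (intro cos_monotone_0_pi) auto
    moreover have "cos (2*pi - (a+b)) = cos (a+b)"
      by (metis cos_2pi_minus)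
    ultimately show ?thesis by simp
  qed
  hence 2: "cos a * cos b - sin a * sin b < cos g" by (simp add: cos_add)
  show ?thesis using 1 2 by linarith
qed

lemma ang_facts:
  assumes "norm (u::real^2) = 1" "norm (w::real^2) = 1"
  shows "angle2 u w = arccos (u \<bullet> w)" "cos (angle2 u w) = u \<bullet> w"
    "sin (angle2 u w) = \<bar>det2 u w\<bar>" "0 \<le> angle2 u w" "angle2 u w \<le> pi"
proof -
  have id: "(det2 u w)\<^sup>2 + (u \<bullet> w)\<^sup>2 = (u$1*u$1 + u$2*u$2) * (w$1*w$1 + w$2*w$2)"
    by (simp add: det2_def inner2 power2_eq_square algebra_simps)
  hence id2: "(det2 u w)\<^sup>2 = 1 - (u \<bullet> w)\<^sup>2" using unit2[OF assms(1)] unit2[OF assms(2)] by simp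
  have "(u \<bullet> w)\<^sup>2 \<le> 1" using id2 by (metis diff_ge_0_iff_ge zero_le_power2)
  hence "\<bar>u \<bullet> w\<bar> \<le> 1" using abs_square_le_1 by blast
  hence b: "-1 \<le> u \<bullet> w" "u \<bullet> w \<le> 1" by auto
  show a: "angle2 u w = arccos (u \<bullet> w)" using assms by (simp add: angle2_def)
  show "cos (angle2 u w) = u \<bullet> w" using a b by simp
  show "sin (angle2 u w) = \<bar>det2 u w\<bar>" unfolding a sin_arccos[OF b] id2[symmetric]
    by simp
  show "0 \<le> angle2 u w" "angle2 u w \<le> pi" using a b by (simp_all add: arccos_lbound arccos_ubound)
qed

lemma tri:
  assumes "norm (v i j) = 1" "norm (v i k) = 1" "norm (v j i) = 1" "norm (v j k) = 1"
    "norm (v k i) = 1" "norm (v k j) = 1"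
    and "strict_sph_tri v i j k"
  shows "\<bar>v k i \<bullet> v k j - (v i j \<bullet> v i k) * (v j i \<bullet> v j k)\<bar>
           < \<bar>det2 (v i j) (v i k) * det2 (v j i) (v j k)\<bar>"
proof -
  note A = ang_facts[OF assms(1,2)] and B = ang_facts[OF assms(3,4)] and G = ang_facts[OF assms(5,6)]
  have "\<bar>cos (angle2 (v k i) (v k j)) - cos (angle2 (v i j) (v i k)) * cos (angle2 (v j i) (v j k))\<bar>
      < sin (angle2 (v i j) (v i k)) * sin (angle2 (v j i) (v j k))"
    using assms(7) A B G unfolding strict_sph_tri_def Let_def by (intro trig) auto
  thus ?thesis using A B G by (simp add: abs_mult)
qed

lemma transfer:
  fixes A :: "real^3^3"
  assumes "norm u = 1" "A *v emb F u = emb G u" "A *v emb F (J u) = emb G (J u)"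
  shows "act A F = G"
proof -
  have e: "A *v emb F x = emb G x" for x
  proof -
    have "A *v emb F x = A *v ((x \<bullet> u) *\<^sub>R emb F u + det2 u x *\<^sub>R emb F (J u))"
      using emb_expand[OF assms(1)] by metis
    also have "\<dots> = (x \<bullet> u) *\<^sub>R emb G u + det2 u x *\<^sub>R emb G (J u)"
      using assms by (simp add: matrix_vector_mult_scaleR matrix_vector_right_distrib)
    also have "\<dots> = emb G x" using emb_expand[OF assms(1)] by metis
    finally show ?thesis .
  qed
  show ?thesis using e[of "axis 1 1"] e[of "axis 2 1"]
    by (simp add: act_def emb_axis prod_eq_iff)
qed

lemma side:
  assumes "is_frame Fi" "is_frame Fj" "is_frame Fk" "realizes v i j k Fi Fj Fk"
    and "norm (v i j) = 1" "norm (v j i) = 1"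
  shows "emb Fj (v j i) = emb Fi (v i j)"
    "emb Fi (v i j) \<bullet> emb Fi (v i j) = 1" "emb Fi (J (v i j)) \<bullet> emb Fi (J (v i j)) = 1"
    "emb Fj (J (v j i)) \<bullet> emb Fj (J (v j i)) = 1"
    "emb Fi (v i j) \<bullet> emb Fi (J (v i j)) = 0" "emb Fi (v i j) \<bullet> emb Fj (J (v j i)) = 0"
    "v k i \<bullet> v k j - (v i j \<bullet> v i k) * (v j i \<bullet> v j k)
       = (emb Fi (J (v i j)) \<bullet> emb Fj (J (v j i))) * (det2 (v i j) (v i k) * det2 (v j i) (v j k))"
proof -
  let ?u = "v i j" and ?w = "v j i"
  let ?c = "emb Fi ?u" and ?p = "emb Fi (J ?u)" and ?q = "emb Fj (J ?w)"
  have R: "emb Fi (v i j) = emb Fj (v j i)" "emb Fi (v i k) = emb Fk (v k i)" "emb Fj (v j k) = emb Fk (v k j)"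
    using assms(4) by (auto simp: realizes_def)
  show cj: "emb Fj ?w = ?c" using R by simp
  have uu: "?u \<bullet> ?u = 1" "?w \<bullet> ?w = 1" using assms(5,6) by (simp_all add: norm_eq_1)
  show cc: "?c \<bullet> ?c = 1" using emb_inner[OF assms(1)] uu by simp
  show pp: "?p \<bullet> ?p = 1" using emb_inner[OF assms(1)] uu J_inner by simp
  show qq: "?q \<bullet> ?q = 1" using emb_inner[OF assms(2)] uu J_inner by simp
  show cp: "?c \<bullet> ?p = 0" using emb_inner[OF assms(1)] J_inner by simp
  have "emb Fj ?w \<bullet> ?q = 0" using emb_inner[OF assms(2)] J_inner by simp
  thus cq: "?c \<bullet> ?q = 0" using cj by simp
  have x: "emb Fi (v i k) = (v i k \<bullet> ?u) *\<^sub>R ?c + det2 ?u (v i k) *\<^sub>R ?p"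
    by (rule emb_expand[OF assms(5)])
  have y: "emb Fj (v j k) = (v j k \<bullet> ?w) *\<^sub>R ?c + det2 ?w (v j k) *\<^sub>R ?q"
    using emb_expand[OF assms(6)] cj by metis
  have "v k i \<bullet> v k j = emb Fi (v i k) \<bullet> emb Fj (v j k)"
    using R emb_inner[OF assms(3)] by simp
  also have "\<dots> = (v i k \<bullet> ?u) * (v j k \<bullet> ?w) + det2 ?u (v i k) * det2 ?w (v j k) * (?p \<bullet> ?q)"
    unfolding x y using cc cq cp
    by (simp add: inner_add_left inner_add_right inner_commute[of ?p ?c])
  finally show "v k i \<bullet> v k j - (v i j \<bullet> v i k) * (v j i \<bullet> v j k)
       = (?p \<bullet> ?q) * (det2 (v i j) (v i k) * det2 (v j i) (v j k))"
    by (simp add: inner_commute algebra_simps)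
qed

lemma arith:
  fixes Dk Dm tF tG :: real
  assumes "Dk \<noteq> 0" "Dm \<noteq> 0" "tF * Dk * \<bar>Dm\<bar> - sgn (Dk * Dm) * (tG * Dm) * \<bar>Dk\<bar> = 0"
  shows "tF = tG"
proof -
  have "sgn (Dk * Dm) * Dm * \<bar>Dk\<bar> = Dk * \<bar>Dm\<bar>"
    using assms(1,2) by (cases "Dk > 0"; cases "Dm > 0") (auto simp: sgn_mult)
  hence "(tF - tG) * (Dk * \<bar>Dm\<bar>) = 0" using assms(3) by (simp add: algebra_simps)
  thus ?thesis using assms(1,2) by simp
qed


theorem lemma1:
  fixes N :: nat and v :: "nat \<Rightarrow> nat \<Rightarrow> real^2" and i j k m :: nat
  assumes "common_lines_data N v"
    and "i \<in> {1..N}" "j \<in> {1..N}" "k \<in> {1..N}" "m \<in> {1..N}"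
    and "distinct [i, j, k, m]"
    and "strict_sph_tri v i j k" "strict_sph_tri v i j m"
    and "\<forall>(p, q) \<in> {(i, j), (i, k), (j, k), (i, m), (j, m)}. norm (v p q) = 1 \<and> norm (v q p) = 1"
    and "L_quant v i j k m = 0"
  shows "\<forall>Fi Fj Fk Gi Gj Gm.
           is_frame Fi \<and> is_frame Fj \<and> is_frame Fk \<and> realizes v i j k Fi Fj Fk \<and>
           is_frame Gi \<and> is_frame Gj \<and> is_frame Gm \<and> realizes v i j m Gi Gj Gm \<longrightarrow>
           (\<exists>!A. orthogonal_matrix A \<and> act A Fi = Gi \<and> act A Fj = Gj)"
proof (intro allI impI)
  fix Fi Fj Fk Gi Gj Gm
  assume H: "is_frame Fi \<and> is_frame Fj \<and> is_frame Fk \<and> realizes v i j k Fi Fj Fk \<and>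
           is_frame Gi \<and> is_frame Gj \<and> is_frame Gm \<and> realizes v i j m Gi Gj Gm"
  have nv: "norm (v i j) = 1" "norm (v j i) = 1" "norm (v i k) = 1" "norm (v k i) = 1"
    "norm (v j k) = 1" "norm (v k j) = 1" "norm (v i m) = 1" "norm (v m i) = 1"
    "norm (v j m) = 1" "norm (v m j) = 1" using assms(9) by auto
  let ?u = "v i j" and ?w = "v j i"
  let ?c = "emb Fi ?u" and ?p = "emb Fi (J ?u)" and ?q = "emb Fj (J ?w)"
  let ?c' = "emb Gi ?u" and ?p' = "emb Gi (J ?u)" and ?q' = "emb Gj (J ?w)"
  define tF where "tF = ?p \<bullet> ?q"
  define tG where "tG = ?p' \<bullet> ?q'"
  define Dk where "Dk = det2 (v i j) (v i k) * det2 (v j i) (v j k)"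
  define Dm where "Dm = det2 (v i j) (v i m) * det2 (v j i) (v j m)"
  note SF = side[of Fi Fj Fk v i j k] and SG = side[of Gi Gj Gm v i j m]
  have SF': "emb Fj (v j i) = ?c" "?c \<bullet> ?c = 1" "?p \<bullet> ?p = 1" "?q \<bullet> ?q = 1" "?c \<bullet> ?p = 0" "?c \<bullet> ?q = 0"
    "v k i \<bullet> v k j - (v i j \<bullet> v i k) * (v j i \<bullet> v j k) = tF * Dk"
    using SF H nv unfolding tF_def Dk_def by auto
  have SG': "emb Gj (v j i) = ?c'" "?c' \<bullet> ?c' = 1" "?p' \<bullet> ?p' = 1" "?q' \<bullet> ?q' = 1" "?c' \<bullet> ?p' = 0" "?c' \<bullet> ?q' = 0"
    "v m i \<bullet> v m j - (v i j \<bullet> v i m) * (v j i \<bullet> v j m) = tG * Dm"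
    using SG H nv unfolding tG_def Dm_def by auto
  have TF: "\<bar>tF * Dk\<bar> < \<bar>Dk\<bar>" using tri[of v i j k] nv assms(7) SF'(7) Dk_def by simp
  have TG: "\<bar>tG * Dm\<bar> < \<bar>Dm\<bar>" using tri[of v i j m] nv assms(8) SG'(7) Dm_def by simp
  have Dk0: "Dk \<noteq> 0" using TF by auto
  have Dm0: "Dm \<noteq> 0" using TG by auto
  have tF1: "\<bar>tF\<bar> < 1" using TF Dk0 by (simp add: abs_mult)
  have "tF * Dk * \<bar>Dm\<bar> - sgn (Dk * Dm) * (tG * Dm) * \<bar>Dk\<bar> = 0"
    using assms(10) SF'(7) SG'(7) unfolding L_quant_def Let_def Dk_def Dm_def
    by (simp add: ac_simps)
  hence tt: "tF = tG" using arith Dk0 Dm0 by blast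
  have eq: "(act A Fi = Gi \<and> act A Fj = Gj) \<longleftrightarrow> (A *v ?c = ?c' \<and> A *v ?p = ?p' \<and> A *v ?q = ?q')"
    for A :: "real^3^3"
  proof
    assume "act A Fi = Gi \<and> act A Fj = Gj"
    thus "A *v ?c = ?c' \<and> A *v ?p = ?p' \<and> A *v ?q = ?q'" by (simp add: emb_act)
  next
    assume a: "A *v ?c = ?c' \<and> A *v ?p = ?p' \<and> A *v ?q = ?q'"
    have "act A Fi = Gi" using a by (intro transfer[OF nv(1)]) auto
    moreover have "act A Fj = Gj" using a SF'(1) SG'(1) by (intro transfer[OF nv(2)]) auto
    ultimately show "act A Fi = Gi \<and> act A Fj = Gj" ..
  qed
  have "\<exists>!A::real^3^3. orthogonal_matrix A \<and> A *v ?c = ?c' \<and> A *v ?p = ?p' \<and> A *v ?q = ?q'"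
    by (rule geom[of _ _ _ tF]) (use SF' SG' tF1 tt tF_def tG_def in auto)
  thus "\<exists>!A. orthogonal_matrix A \<and> act A Fi = Gi \<and> act A Fj = Gj"
    using eq by simp
qed

end
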